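(* Let $n \ge 2$, let $\triangle$ be an $n$-dimensional simplex in $\mathbb{R}^n$, and let $K$ be a compact convex subset of $\mathbb{R}^n$ such that: (i) for every unit vector $u \in \mathbb{R}^n$, the projection $\triangle_u$ contains a translate of $K_u$; (ii) $\triangle$ does not contain any translate of $K$. Then there exists $t \in (0,1)$ such that the convex body $L = (1-t)K + t\triangle$ satisfies: (i') for every unit vector $u$, the projection $\triangle_u$ contains a translate of $L_u$; (ii') $V_n(L) > V_n(\triangle)$.
   Context: For a set $S \subseteq \mathbb{R}^n$ and a unit vector $u$, $S_u$ denotes the orthogonal projection of $S$ onto the hyperplane $u^\perp$. "$A$ contains a translate of $B$" means $B + w \subseteq A$ for some vector $w$. For $a,b \ge 0$, $aK + bL = \{ax + by : x \in K, y \in L\}$ (Minkowski combination). $V_n$ denotes $n$-dimensional Lebesgue volume. *)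

theory Defs
  imports "HOL-Analysis.Analysis"
begin

definition proj_perp :: "'a::euclidean_space \<Rightarrow> 'a set \<Rightarrow> 'a set" where
  "proj_perp u S = (\<lambda>x. x - (x \<bullet> u) *\<^sub>R u) ` S"

definition contains_translate :: "'a::real_vector set \<Rightarrow> 'a set \<Rightarrow> bool" where
  "contains_translate A B \<longleftrightarrow> (\<exists>w. (\<lambda>x. x + w) ` B \<subseteq> A)"

definition mink_comb :: "real \<Rightarrow> 'a::real_vector set \<Rightarrow> real \<Rightarrow> 'a set \<Rightarrow> 'a set" where
  "mink_comb a K b L = {a *\<^sub>R x + b *\<^sub>R y | x y. x \<in> K \<and> y \<in> L}"

end

theory Submission
  imports Defs
begin


definition bc :: "'a::euclidean_space set \<Rightarrow> 'a \<Rightarrow> 'a \<Rightarrow> real" where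
  "bc C x = (THE \<mu>. sum \<mu> C = 1 \<and> (\<Sum>v\<in>C. \<mu> v *\<^sub>R v) = x \<and> (\<forall>v. v \<notin> C \<longrightarrow> \<mu> v = 0))"

context
  fixes Cv :: "'a::euclidean_space set"
  assumes finC: "finite Cv" and indC: "\<not> affine_dependent Cv" and hullC: "affine hull Cv = UNIV"
begin

lemma bc_uniq:
  assumes "sum \<mu> Cv = 1" "(\<Sum>v\<in>Cv. \<mu> v *\<^sub>R v) = x"
    "sum \<mu>' Cv = 1" "(\<Sum>v\<in>Cv. \<mu>' v *\<^sub>R v) = x" "v \<in> Cv"
  shows "\<mu> v = \<mu>' v"
proof (rule ccontr)
  assume ne: "\<mu> v \<noteq> \<mu>' v"
  let ?U = "\<lambda>v. \<mu> v - \<mu>' v"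
  have "sum ?U Cv = 0" using assms by (simp add: sum_subtractf)
  moreover have "(\<Sum>v\<in>Cv. ?U v *\<^sub>R v) = 0"
    using assms by (simp add: scaleR_diff_left sum_subtractf)
  ultimately have "affine_dependent Cv"
    unfolding affine_dependent_explicit_finite[OF finC]
    by (intro exI[of _ ?U]) (use ne assms(5) in auto)
  with indC show False by simp
qed

lemma bc_ex: "\<exists>\<mu>. sum \<mu> Cv = 1 \<and> (\<Sum>v\<in>Cv. \<mu> v *\<^sub>R v) = x \<and> (\<forall>v. v \<notin> Cv \<longrightarrow> \<mu> v = 0)"
proof -
  have "x \<in> affine hull Cv" using hullC by simp
  then obtain u where u: "sum u Cv = 1" "(\<Sum>v\<in>Cv. u v *\<^sub>R v) = x"
    using affine_hull_finite[OF finC] by auto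
  let ?m = "\<lambda>v. if v \<in> Cv then u v else 0"
  have "sum ?m Cv = 1" using u by (simp cong: sum.cong)
  moreover have "(\<Sum>v\<in>Cv. ?m v *\<^sub>R v) = x" using u by (simp cong: sum.cong)
  ultimately show ?thesis by (intro exI[of _ ?m]) auto
qed

lemma bc_spec: "sum (bc Cv x) Cv = 1 \<and> (\<Sum>v\<in>Cv. bc Cv x v *\<^sub>R v) = x \<and> (\<forall>v. v \<notin> Cv \<longrightarrow> bc Cv x v = 0)"
proof -
  obtain \<mu> where m: "sum \<mu> Cv = 1 \<and> (\<Sum>v\<in>Cv. \<mu> v *\<^sub>R v) = x \<and> (\<forall>v. v \<notin> Cv \<longrightarrow> \<mu> v = 0)"
    using bc_ex by blast
  show ?thesis unfolding bc_def
  proof (rule theI[of _ \<mu>])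
    show "sum \<mu> Cv = 1 \<and> (\<Sum>v\<in>Cv. \<mu> v *\<^sub>R v) = x \<and> (\<forall>v. v \<notin> Cv \<longrightarrow> \<mu> v = 0)" by (rule m)
    fix \<nu> assume n: "sum \<nu> Cv = 1 \<and> (\<Sum>v\<in>Cv. \<nu> v *\<^sub>R v) = x \<and> (\<forall>v. v \<notin> Cv \<longrightarrow> \<nu> v = 0)"
    show "\<nu> = \<mu>"
    proof
      fix v show "\<nu> v = \<mu> v"
        using bc_uniq[of \<nu> x \<mu> v] n m by (cases "v \<in> Cv") auto
    qed
  qed
qed

lemma bc_sum: "sum (bc Cv x) Cv = 1" using bc_spec by blast
lemma bc_comb: "(\<Sum>v\<in>Cv. bc Cv x v *\<^sub>R v) = x" using bc_spec by blast

lemma bc_lincomb: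
  assumes "sum \<mu> Cv = 1" "v \<in> Cv"
  shows "bc Cv (\<Sum>v\<in>Cv. \<mu> v *\<^sub>R v) v = \<mu> v"
  using bc_uniq[of "bc Cv (\<Sum>v\<in>Cv. \<mu> v *\<^sub>R v)" "\<Sum>v\<in>Cv. \<mu> v *\<^sub>R v" \<mu> v] bc_sum bc_comb assms
  by auto

lemma hull_bc: "convex hull Cv = {x. \<forall>v\<in>Cv. 0 \<le> bc Cv x v}"
proof safe
  fix x v assume x: "x \<in> convex hull Cv" and v: "v \<in> Cv"
  then obtain u where u: "\<forall>x\<in>Cv. 0 \<le> u x" "sum u Cv = 1" "(\<Sum>v\<in>Cv. u v *\<^sub>R v) = x"
    using convex_hull_finite[OF finC] by auto
  then show "0 \<le> bc Cv x v" using bc_lincomb[of u v] v by auto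
next
  fix x assume "\<forall>v\<in>Cv. 0 \<le> bc Cv x v"
  then show "x \<in> convex hull Cv"
    using convex_hull_finite[OF finC] bc_sum bc_comb by blast
qed

lemma bc_add: "v \<in> Cv \<Longrightarrow> bc Cv (x + y) v = bc Cv x v + bc Cv y v - bc Cv 0 v"
proof -
  assume v: "v \<in> Cv"
  let ?m = "\<lambda>v. bc Cv x v + bc Cv y v - bc Cv 0 v"
  have "sum ?m Cv = 1" by (simp add: sum.distrib sum_subtractf bc_sum)
  moreover have "(\<Sum>v\<in>Cv. ?m v *\<^sub>R v) = x + y"
    by (simp add: scaleR_add_left scaleR_diff_left sum.distrib sum_subtractf bc_comb)
  ultimately show ?thesis using bc_lincomb[of ?m v] v by simp
qed

lemma bc_scale: "v \<in> Cv \<Longrightarrow> bc Cv (c *\<^sub>R x) v = c * bc Cv x v + (1 - c) * bc Cv 0 v"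
proof -
  assume v: "v \<in> Cv"
  let ?m = "\<lambda>v. c * bc Cv x v + (1 - c) * bc Cv 0 v"
  have "sum ?m Cv = 1" by (simp add: sum.distrib sum_distrib_left[symmetric] bc_sum)
  moreover have "(\<Sum>v\<in>Cv. ?m v *\<^sub>R v) = c *\<^sub>R x"
  proof -
    have "(\<Sum>v\<in>Cv. ?m v *\<^sub>R v) = c *\<^sub>R (\<Sum>v\<in>Cv. bc Cv x v *\<^sub>R v) + (1 - c) *\<^sub>R (\<Sum>v\<in>Cv. bc Cv 0 v *\<^sub>R v)"
      by (simp add: scaleR_add_left sum.distrib scaleR_sum_right)
    also have "\<dots> = c *\<^sub>R x" by (simp add: bc_comb)
    finally show ?thesis .
  qed
  ultimately show ?thesis using bc_lincomb[of ?m v] v by simp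
qed

lemma bc_cont: "v \<in> Cv \<Longrightarrow> continuous_on S (\<lambda>x. bc Cv x v)"
proof -
  assume v: "v \<in> Cv"
  let ?f = "\<lambda>x. bc Cv x v - bc Cv 0 v"
  have "linear ?f"
    by (rule linearI) (simp_all add: bc_add bc_scale v algebra_simps)
  then have "bounded_linear ?f" by (simp add: linear_linear)
  then have "continuous_on S ?f" by (rule linear_continuous_on)
  from continuous_on_add[OF this continuous_on_const[of S "bc Cv 0 v"]]
  show ?thesis by simp
qed

definition Sset :: "('a \<Rightarrow> real) \<Rightarrow> 'a set" where
  "Sset a = {x. \<forall>v\<in>Cv. a v \<le> bc Cv x v}"

lemma Sset_homothet:
  assumes "sum a Cv < 1"
  shows "Sset a = (\<lambda>y. (1 - sum a Cv) *\<^sub>R y + (\<Sum>v\<in>Cv. a v *\<^sub>R v)) ` (convex hull Cv)"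
proof -
  define r where "r = 1 - sum a Cv"
  have r: "r > 0" using assms by (simp add: r_def)
  have img: "bc Cv (r *\<^sub>R y + (\<Sum>v\<in>Cv. a v *\<^sub>R v)) v = r * bc Cv y v + a v" if "v \<in> Cv" for y v
  proof -
    let ?m = "\<lambda>v. r * bc Cv y v + a v"
    have "sum ?m Cv = 1" by (simp add: sum.distrib sum_distrib_left[symmetric] bc_sum r_def)
    moreover have "(\<Sum>v\<in>Cv. ?m v *\<^sub>R v) = r *\<^sub>R y + (\<Sum>v\<in>Cv. a v *\<^sub>R v)"
    proof -
      have "(\<Sum>v\<in>Cv. (r * bc Cv y v) *\<^sub>R v) = r *\<^sub>R (\<Sum>v\<in>Cv. bc Cv y v *\<^sub>R v)"
        by (simp add: scaleR_sum_right)
      then show ?thesis by (simp add: scaleR_add_left sum.distrib bc_comb)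
    qed
    ultimately show ?thesis using bc_lincomb[of ?m v] that by simp
  qed
  show ?thesis unfolding r_def[symmetric]
  proof safe
    fix x assume x: "x \<in> Sset a"
    let ?m = "\<lambda>v. (bc Cv x v - a v) / r"
    define y where "y = (\<Sum>v\<in>Cv. ?m v *\<^sub>R v)"
    have sm: "sum ?m Cv = 1"
      using r by (simp add: sum_divide_distrib[symmetric] sum_subtractf bc_sum r_def)
    have "y \<in> convex hull Cv"
      unfolding convex_hull_finite[OF finC] y_def
      by (intro CollectI exI[of _ ?m]) (use x r sm in \<open>auto simp: Sset_def\<close>)
    moreover have "x = r *\<^sub>R y + (\<Sum>v\<in>Cv. a v *\<^sub>R v)"
    proof -
      have "r *\<^sub>R y = (\<Sum>v\<in>Cv. (bc Cv x v - a v) *\<^sub>R v)"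
        using r by (simp add: y_def scaleR_sum_right)
      then show ?thesis by (simp add: scaleR_diff_left sum_subtractf bc_comb)
    qed
    ultimately show "x \<in> (\<lambda>y. r *\<^sub>R y + (\<Sum>v\<in>Cv. a v *\<^sub>R v)) ` (convex hull Cv)" by blast
  next
    fix y assume "y \<in> convex hull Cv"
    then have "\<forall>v\<in>Cv. 0 \<le> bc Cv y v" using hull_bc by blast
    then show "r *\<^sub>R y + (\<Sum>v\<in>Cv. a v *\<^sub>R v) \<in> Sset a"
      using r img by (auto simp: Sset_def)
  qed
qed

lemma Sset_measure:
  assumes "sum a Cv < 1"
  shows "measure lebesgue (Sset a) = (1 - sum a Cv) ^ DIM('a) * measure lebesgue (convex hull Cv)"
proof -
  have "1 - sum a Cv > 0" using assms by simp
  then show ?thesis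
    unfolding Sset_homothet[OF assms] measure_lebesgue_affine by simp
qed

lemma Sset_compact:
  assumes "sum a Cv < 1"
  shows "compact (Sset a)"
  unfolding Sset_homothet[OF assms]
  by (intro compact_continuous_image continuous_intros finite_imp_compact_convex_hull finC)

lemma Sset_translate:
  assumes "0 \<le> s" "s < 1" "x \<in> Sset (\<lambda>v. s * bc Cv k v)"
  shows "\<exists>y\<in>convex hull Cv. x = s *\<^sub>R k + (1 - s) *\<^sub>R y"
proof -
  let ?m = "\<lambda>v. (bc Cv x v - s * bc Cv k v) / (1 - s)"
  define y where "y = (\<Sum>v\<in>Cv. ?m v *\<^sub>R v)"
  have sm: "sum ?m Cv = 1"
    using assms by (simp add: sum_divide_distrib[symmetric] sum_subtractf bc_sum sum_distrib_left[symmetric])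
  have "y \<in> convex hull Cv"
    unfolding convex_hull_finite[OF finC] y_def
    by (intro CollectI exI[of _ ?m]) (use assms sm in \<open>auto simp: Sset_def\<close>)
  moreover have "x = s *\<^sub>R k + (1 - s) *\<^sub>R y"
  proof -
    have "(1 - s) *\<^sub>R y = (\<Sum>v\<in>Cv. (bc Cv x v - s * bc Cv k v) *\<^sub>R v)"
      using assms by (simp add: y_def scaleR_sum_right)
    also have "\<dots> = x - s *\<^sub>R k"
      by (simp add: scaleR_diff_left sum_subtractf bc_comb scaleR_sum_right[symmetric] flip: scaleR_scaleR)
    finally show ?thesis by (simp add: algebra_simps)
  qed
  ultimately show ?thesis by blast
qed

lemma fits_if:
  assumes m: "\<And>k v. k \<in> K \<Longrightarrow> v \<in> Cv \<Longrightarrow> m v \<le> bc Cv k v" and sm: "sum m Cv \<ge> 0"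
  shows "contains_translate (convex hull Cv) K"
proof -
  define N where "N = real (card Cv)"
  have N: "N > 0" using bc_sum[of 0] finC by (simp add: N_def card_gt_0_iff) (metis sum.empty zero_neq_one)
  define d where "d v = - m v + sum m Cv / N" for v
  have sd: "sum d Cv = 0" using N by (simp add: d_def sum.distrib N_def sum_subtractf)
  define w where "w = (\<Sum>v\<in>Cv. d v *\<^sub>R v)"
  have "k + w \<in> convex hull Cv" if k: "k \<in> K" for k
  proof -
    have eq: "bc Cv (k + w) v = bc Cv k v + d v" if "v \<in> Cv" for v
    proof -
      let ?m = "\<lambda>v. bc Cv k v + d v"
      have "sum ?m Cv = 1" using sd by (simp add: sum.distrib bc_sum)
      moreover have "(\<Sum>v\<in>Cv. ?m v *\<^sub>R v) = k + w"
        by (simp add: scaleR_add_left sum.distrib bc_comb w_def)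
      ultimately show ?thesis using bc_lincomb[of ?m v] that by simp
    qed
    have "\<forall>v\<in>Cv. 0 \<le> bc Cv (k + w) v"
    proof
      fix v assume v: "v \<in> Cv"
      have "0 \<le> sum m Cv / N" using sm N by simp
      then show "0 \<le> bc Cv (k + w) v" using eq[OF v] m[OF k v] by (simp add: d_def)
    qed
    then show ?thesis using hull_bc by blast
  qed
  then show ?thesis unfolding contains_translate_def by blast
qed

end


lemma pow_lin_lower:
  fixes r d :: real
  assumes "0 \<le> r" "0 \<le> d"
  shows "r ^ Suc n + real (Suc n) * r ^ n * d \<le> (r + d) ^ Suc n"
proof (induction n)
  case 0 then show ?case by simp
next
  case (Suc n)
  have "(r + d) ^ Suc (Suc n) = (r + d) * (r + d) ^ Suc n" by simp
  also have "\<dots> \<ge> (r + d) * (r ^ Suc n + real (Suc n) * r ^ n * d)"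
    using Suc assms by (intro mult_left_mono) auto
  finally have *: "(r + d) * (r ^ Suc n + real (Suc n) * r ^ n * d) \<le> (r + d) ^ Suc (Suc n)" .
  have "r ^ Suc (Suc n) + real (Suc (Suc n)) * r ^ Suc n * d \<le> (r + d) * (r ^ Suc n + real (Suc n) * r ^ n * d)"
    using assms by (simp add: algebra_simps)
  with * show ?case by linarith
qed

lemma key_ineq:
  fixes P \<sigma> s :: real and n :: nat
  assumes n: "n \<ge> 2" and P: "P \<ge> 1" and sg: "\<sigma> > 0"
  defines "s \<equiv> min 1 (\<sigma> / (n * P)) / (2 * n * P)"
  shows "0 < s" "s < 1" "0 < 1 - s * P"
    "(1 - s * P) ^ (n - 1) * ((1 - s * P) + n * s * (P + \<sigma>)) > 1"
proof -
  define x where "x = s * P"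
  have np: "real n * P > 0" using n P by simp
  have mpos: "min 1 (\<sigma> / (n * P)) > 0" using sg np by simp
  have mle: "min 1 (\<sigma> / (n * P)) \<le> 1" by simp
  have mle2: "min 1 (\<sigma> / (n * P)) \<le> \<sigma> / (n * P)" by simp
  show s0: "0 < s" unfolding s_def using mpos np by (simp add: mult.assoc)
  have x_eq: "x = min 1 (\<sigma> / (n * P)) / (2 * n)" using P unfolding x_def s_def by (simp add: field_simps)
  have x0: "x > 0" using x_eq mpos n by simp
  have xle: "x \<le> 1 / (2 * n)" using x_eq mle n by (simp add: divide_right_mono)
  have nx: "n * x \<le> 1/2" using xle n by (simp add: field_simps)
  have xle2: "x * n * n \<le> \<sigma> / (2 * P)"
  proof -
    have "x * n * n = min 1 (\<sigma> / (n * P)) * n / 2" using x_eq n by (simp add: field_simps)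
    also have "\<dots> \<le> (\<sigma> / (n * P)) * n / 2" using mle2 n by (intro divide_right_mono mult_right_mono) auto
    also have "\<dots> = \<sigma> / (2 * P)" using n P by (simp add: field_simps)
    finally show ?thesis .
  qed
  have sx: "s \<le> x" unfolding x_def using s0 P by (simp add: mult_le_cancel_left1)
  have s_eq: "n * s * \<sigma> = n * x * (\<sigma> / P)" using P unfolding x_def by (simp add: field_simps)
  have g0: "\<sigma> / P > 0" using sg P by simp
  have "2 * x \<le> real n * x" using n x0 by (intro mult_right_mono) auto
  then have x4: "x \<le> 1/4" using nx by linarith
  have B: "(1 - x) ^ (n - 1) \<ge> 1 - real (n - 1) * x"
    using Bernoulli_inequality[of "-x" "n - 1"] x0 x4 by simp
  show "s < 1" using sx x4 by linarith
  show "0 < 1 - s * P" using x4 unfolding x_def[symmetric] by linarith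
  have n1: "real (n - 1) = real n - 1" using n by simp
  have A: "1 - real (n - 1) * x \<ge> 1/2" using nx x0 n1 by (simp add: algebra_simps)
  have F: "(1 - x) + n * s * (P + \<sigma>) = 1 + (real n - 1) * x + n * x * (\<sigma> / P)"
    using s_eq unfolding x_def by (simp add: algebra_simps)
  have "(real n - 1) * x \<ge> 0" using x0 n by simp
  moreover have nn: "n * x * (\<sigma> / P) \<ge> 0" using x0 g0 by (intro mult_nonneg_nonneg) auto
  ultimately have Fpos: "1 + (real n - 1) * x + n * x * (\<sigma> / P) \<ge> 0" by linarith
  have "(1 - x) ^ (n - 1) * ((1 - x) + n * s * (P + \<sigma>))
      \<ge> (1 - (real n - 1) * x) * (1 + (real n - 1) * x + n * x * (\<sigma> / P))"
    unfolding F using B Fpos n1 by (intro mult_right_mono) auto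
  moreover have "(1 - (real n - 1) * x) * (1 + (real n - 1) * x + n * x * (\<sigma> / P))
      = 1 - ((real n - 1) * x)^2 + (1 - (real n - 1) * x) * (n * x * (\<sigma> / P))"
    by (simp add: algebra_simps power2_eq_square)
  moreover have "(1 - (real n - 1) * x) * (n * x * (\<sigma> / P)) \<ge> (1/2) * (n * x * (\<sigma> / P))"
    using A nn n1 by (intro mult_right_mono) auto
  moreover have "((real n - 1) * x)^2 < (1/2) * (n * x * (\<sigma> / P))"
  proof -
    have "((real n - 1) * x)^2 \<le> (real n * x)^2" using n x0 by (intro power_mono) auto
    also have "\<dots> = x * (x * n * n)" by (simp add: power2_eq_square)
    also have "\<dots> \<le> x * (\<sigma> / (2 * P))" using xle2 x0 by (intro mult_left_mono) auto
    also have "\<dots> < (1/2) * (n * x * (\<sigma> / P))"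
    proof -
      have a0: "(1/2) * (x * (\<sigma> / P)) > 0" using x0 g0 by (intro mult_pos_pos) auto
      have "x * (\<sigma> / (2 * P)) = (1/2) * (x * (\<sigma> / P))" by simp
      moreover have "(1/2) * (n * x * (\<sigma> / P)) = real n * ((1/2) * (x * (\<sigma> / P)))" by simp
      moreover have "(1/2) * (x * (\<sigma> / P)) < real n * ((1/2) * (x * (\<sigma> / P)))"
        using a0 n by (intro mult_strict_right_mono[of 1 "real n", simplified]) auto
      ultimately show ?thesis by simp
    qed
    finally show ?thesis .
  qed
  ultimately show "(1 - s * P) ^ (n - 1) * ((1 - s * P) + n * s * (P + \<sigma>)) > 1"
    unfolding x_def[symmetric] by linarith
qed

lemma union_measure:
  fixes C :: "'a::euclidean_space set" and D :: "'i \<Rightarrow> 'a set"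
  assumes fin: "finite I" and ne: "I \<noteq> {}" and Cm: "C \<in> lmeasurable" and Dm: "\<And>i. i \<in> I \<Longrightarrow> D i \<in> lmeasurable"
    and sub: "\<And>i. i \<in> I \<Longrightarrow> C \<subseteq> D i"
    and int: "\<And>i j. i \<in> I \<Longrightarrow> j \<in> I \<Longrightarrow> i \<noteq> j \<Longrightarrow> D i \<inter> D j \<subseteq> C"
  shows "measure lebesgue (\<Union>i\<in>I. D i) = measure lebesgue C + (\<Sum>i\<in>I. measure lebesgue (D i) - measure lebesgue C)"
proof -
  have eq: "(\<Union>i\<in>I. D i) = C \<union> (\<Union>i\<in>I. D i - C)" using ne sub by blast
  have Em: "D i - C \<in> lmeasurable" if "i \<in> I" for i using Dm[OF that] Cm by (rule fmeasurable.Diff)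
  have Um: "(\<Union>i\<in>I. D i - C) \<in> lmeasurable" using fin Em by (intro fmeasurable.finite_UN) auto
  have "measure lebesgue (\<Union>i\<in>I. D i) = measure lebesgue C + measure lebesgue (\<Union>i\<in>I. D i - C)"
    unfolding eq using Cm Um by (intro measure_Union) (auto simp: fmeasurable_def)
  also have "measure lebesgue (\<Union>i\<in>I. D i - C) = (\<Sum>i\<in>I. measure lebesgue (D i - C))"
  proof (rule measure_finite_Union[OF fin])
    show "(\<lambda>i. D i - C) ` I \<subseteq> sets lebesgue" using Em by (auto simp: fmeasurable_def)
    show "disjoint_family_on (\<lambda>i. D i - C) I" using int by (auto simp: disjoint_family_on_def)
    show "emeasure lebesgue (D i - C) \<noteq> \<infinity>" if "i \<in> I" for i
      using fmeasurableD2[OF Em[OF that]] by simp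
  qed
  also have "\<dots> = (\<Sum>i\<in>I. measure lebesgue (D i) - measure lebesgue C)"
  proof (rule sum.cong[OF refl])
    fix i assume i: "i \<in> I"
    show "measure lebesgue (D i - C) = measure lebesgue (D i) - measure lebesgue C"
      by (rule measurable_measure_Diff[OF Dm[OF i] fmeasurableD[OF Cm] sub[OF i]])
  qed
  finally show ?thesis .
qed



theorem theorem3p1:
  fixes T K :: "'a::euclidean_space set"
  assumes dim: "DIM('a) \<ge> 2"
    and simp: "int DIM('a) simplex T"
    and Kcomp: "compact K" and Kconv: "convex K"
    and proj: "\<forall>u. norm u = 1 \<longrightarrow> contains_translate (proj_perp u T) (proj_perp u K)"
    and notr: "\<not> contains_translate T K"
  shows "\<exists>t. 0 < t \<and> t < 1 \<and>
           (let L = mink_comb (1 - t) K t T in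
              (\<forall>u. norm u = 1 \<longrightarrow> contains_translate (proj_perp u T) (proj_perp u L)) \<and>
              measure lebesgue L > measure lebesgue T)"
proof -
  obtain Cv where indC: "\<not> affine_dependent Cv" and cardC: "int (card Cv) = int DIM('a) + 1"
    and TC: "T = convex hull Cv"
    using simp unfolding simplex_def by blast
  have cardC': "card Cv = DIM('a) + 1" using cardC by linarith
  have finC: "finite Cv" using cardC' by (metis card.infinite add_is_0 one_neq_zero)
  have CvNE: "Cv \<noteq> {}" using cardC' by auto
  have "aff_dim Cv = int DIM('a)" using aff_dim_affine_independent[OF indC] cardC' by simp
  then have hullC: "affine hull Cv = UNIV" using aff_dim_eq_full by blast
  note B = finC indC hullC
  have Kne: "K \<noteq> {}" using notr unfolding contains_translate_def by auto
  have "\<forall>v\<in>Cv. \<exists>k\<in>K. \<forall>k'\<in>K. bc Cv k v \<le> bc Cv k' v"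
    using continuous_attains_inf[OF Kcomp Kne bc_cont[OF B]] by blast
  then obtain kk where kk: "\<And>v. v \<in> Cv \<Longrightarrow> kk v \<in> K"
    and kkmin: "\<And>v k'. v \<in> Cv \<Longrightarrow> k' \<in> K \<Longrightarrow> bc Cv (kk v) v \<le> bc Cv k' v"
    by metis
  define m where "m v = bc Cv (kk v) v" for v
  define \<sigma> where "\<sigma> = - sum m Cv"
  have sg: "\<sigma> > 0"
  proof (rule ccontr)
    assume "\<not> \<sigma> > 0"
    then have "sum m Cv \<ge> 0" by (simp add: \<sigma>_def)
    then have "contains_translate (convex hull Cv) K"
      using fits_if[OF B, of K m] kkmin by (auto simp: m_def)
    with notr TC show False by simp
  qed
  define M where "M v = Max ((\<lambda>l. bc Cv (kk l) v) ` Cv)" for v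
  have Mge: "bc Cv (kk l) v \<le> M v" if "l \<in> Cv" for l v
    unfolding M_def using finC that by (intro Max_ge) auto
  have mM: "m v \<le> M v" if "v \<in> Cv" for v using Mge[OF that] by (simp add: m_def)
  define P where "P = sum M Cv"
  have P1: "P \<ge> 1"
  proof -
    obtain l0 where l0: "l0 \<in> Cv" using CvNE by blast
    have "1 = sum (bc Cv (kk l0)) Cv" using bc_sum[OF B] by simp
    also have "\<dots> \<le> P" unfolding P_def using Mge[OF l0] by (intro sum_mono) auto
    finally show ?thesis .
  qed
  define n where "n = DIM('a)"
  have n2: "n \<ge> 2" using dim by (simp add: n_def)
  define s where "s = min 1 (\<sigma> / (n * P)) / (2 * n * P)"
  note KI = key_ineq[OF n2 P1 sg, folded s_def]
  have s0: "0 < s" and s1: "s < 1" and rho0: "0 < 1 - s * P" using KI by auto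
  define t where "t = 1 - s"
  have t0: "0 < t" "t < 1" using s0 s1 by (auto simp: t_def)
  have st: "1 - t = s" by (simp add: t_def)
  define L where "L = mink_comb (1 - t) K t T"
  have Lform: "L = (\<lambda>p. s *\<^sub>R fst p + t *\<^sub>R snd p) ` (K \<times> T)"
    unfolding L_def mink_comb_def st by force
  have Tcomp: "compact T" unfolding TC by (rule finite_imp_compact_convex_hull[OF finC])
  have Lcomp: "compact L" unfolding Lform
    by (intro compact_continuous_image compact_Times Kcomp Tcomp continuous_intros)
  have projL: "\<forall>u. norm u = 1 \<longrightarrow> contains_translate (proj_perp u T) (proj_perp u L)"
  proof (intro allI impI)
    fix u :: 'a assume "norm u = 1"
    then obtain w where w: "(\<lambda>x. x + w) ` proj_perp u K \<subseteq> proj_perp u T"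
      using proj unfolding contains_translate_def by blast
    define p where "p x = x - (x \<bullet> u) *\<^sub>R u" for x
    have lp: "linear p" unfolding p_def by (intro linear_compose_sub linearI) (auto simp: inner_simps algebra_simps)
    have cvx: "convex (p ` T)" using lp TC by (intro convex_linear_image) auto
    have pT: "proj_perp u T = p ` T" "proj_perp u K = p ` K" "proj_perp u L = p ` L"
      by (auto simp: proj_perp_def p_def)
    have "(\<lambda>x. x + s *\<^sub>R w) ` (p ` L) \<subseteq> p ` T"
    proof clarify
      fix z assume "z \<in> L"
      then obtain k y where k: "k \<in> K" and y: "y \<in> T" and z: "z = s *\<^sub>R k + t *\<^sub>R y"
        unfolding Lform by auto
      have "p z + s *\<^sub>R w = s *\<^sub>R (p k + w) + t *\<^sub>R p y"
        unfolding z using linear_add[OF lp] linear_scale[OF lp] by (simp add: algebra_simps)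
      moreover have "p k + w \<in> p ` T" using w k pT by auto
      moreover have "p y \<in> p ` T" using y by auto
      ultimately show "p z + s *\<^sub>R w \<in> p ` T"
        using convexD[OF cvx] s0 t0 by (simp add: t_def)
    qed
    then show "contains_translate (proj_perp u T) (proj_perp u L)"
      unfolding contains_translate_def pT by blast
  qed
  define \<rho> where "\<rho> = 1 - s * P"
  define c where "c v = s * M v" for v
  define a where "a i v = (if v = i then s * m v else s * M v)" for i v
  have sumc: "sum c Cv = s * P" unfolding c_def P_def by (simp add: sum_distrib_left)
  have suma: "1 - sum (a i) Cv = \<rho> + s * (M i - m i)" if i: "i \<in> Cv" for i
  proof -
    have "a i v = c v - (if v = i then s * (M i - m i) else 0)" for v
      by (auto simp: a_def c_def algebra_simps)
    then have "sum (a i) Cv = sum c Cv - s * (M i - m i)"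
      using finC i by (simp add: sum_subtractf)
    then show ?thesis using sumc by (simp add: \<rho>_def)
  qed
  have dpos: "s * (M i - m i) \<ge> 0" if "i \<in> Cv" for i using mM[OF that] s0 by simp
  have sumc1: "sum c Cv < 1" using sumc rho0 by simp
  have suma1: "sum (a i) Cv < 1" if "i \<in> Cv" for i using suma[OF that] dpos[OF that] rho0 by (simp add: \<rho>_def)
  define Cs where "Cs = Sset Cv c"
  define D where "D i = Sset Cv (a i)" for i
  have CsD: "Cs \<subseteq> D i" if "i \<in> Cv" for i
    unfolding Cs_def D_def Sset_def[OF B] using mM s0
    by (auto simp: a_def c_def intro: order_trans[rotated] mult_left_mono)
  have DD: "D i \<inter> D j \<subseteq> Cs" if "i \<in> Cv" "j \<in> Cv" "i \<noteq> j" for i j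
    unfolding Cs_def D_def Sset_def[OF B] using that
    by (auto simp: a_def c_def)
  have DL: "D i \<subseteq> L" if i: "i \<in> Cv" for i
  proof
    fix x assume x: "x \<in> D i"
    have "x \<in> Sset Cv (\<lambda>v. s * bc Cv (kk i) v)"
      unfolding Sset_def[OF B]
    proof (intro CollectI ballI)
      fix v assume v: "v \<in> Cv"
      have xa: "a i v \<le> bc Cv x v" using x v unfolding D_def Sset_def[OF B] by auto
      have "s * bc Cv (kk i) v \<le> a i v"
        using Mge[OF i, of v] s0 by (auto simp: a_def m_def)
      then show "s * bc Cv (kk i) v \<le> bc Cv x v" using xa by linarith
    qed
    then obtain y where y: "y \<in> convex hull Cv" and xy: "x = s *\<^sub>R kk i + (1 - s) *\<^sub>R y"
      using Sset_translate[OF B, of s x "kk i"] s0 s1 by auto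
    show "x \<in> L" unfolding Lform using kk[OF i] y xy TC by (auto simp: t_def image_iff)
  qed
  define VT where "VT = measure lebesgue T"
  have VT0: "VT > 0"
  proof -
    have "interior T \<noteq> {}"
    proof -
      have "rel_interior T = interior T" using hullC TC by (intro rel_interior_interior) simp
      moreover have "rel_interior T \<noteq> {}" using CvNE TC by (simp add: rel_interior_eq_empty)
      ultimately show ?thesis by simp
    qed
    then have "\<not> negligible T" using TC by (simp add: negligible_convex_interior)
    then have "VT \<noteq> 0" using negligible_iff_measure0[OF lmeasurable_compact[OF Tcomp]] by (simp add: VT_def)
    moreover have "VT \<ge> 0" by (simp add: VT_def)
    ultimately show ?thesis by simp
  qed
  have VC: "measure lebesgue Cs = \<rho> ^ n * VT"
    unfolding Cs_def Sset_measure[OF B sumc1] sumc \<rho>_def VT_def n_def TC ..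
  have VD: "measure lebesgue (D i) = (\<rho> + s * (M i - m i)) ^ n * VT" if i: "i \<in> Cv" for i
    unfolding D_def Sset_measure[OF B suma1[OF i]] suma[OF i] VT_def n_def TC ..
  have Cm: "Cs \<in> lmeasurable" unfolding Cs_def by (intro lmeasurable_compact Sset_compact[OF B sumc1])
  have Dm: "D i \<in> lmeasurable" if "i \<in> Cv" for i unfolding D_def by (intro lmeasurable_compact Sset_compact[OF B suma1[OF that]])
  have "measure lebesgue (\<Union>i\<in>Cv. D i) = measure lebesgue Cs + (\<Sum>i\<in>Cv. measure lebesgue (D i) - measure lebesgue Cs)"
    by (rule union_measure[OF finC CvNE Cm Dm CsD DD])
  also have "\<dots> = \<rho> ^ n * VT + (\<Sum>i\<in>Cv. ((\<rho> + s * (M i - m i)) ^ n - \<rho> ^ n) * VT)"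
    using VC VD by (simp add: algebra_simps cong: sum.cong)
  also have "\<dots> \<ge> \<rho> ^ n * VT + (\<Sum>i\<in>Cv. (real n * \<rho> ^ (n - 1) * (s * (M i - m i))) * VT)"
  proof -
    have "(real n * \<rho> ^ (n - 1) * (s * (M i - m i))) * VT \<le> ((\<rho> + s * (M i - m i)) ^ n - \<rho> ^ n) * VT"
      if i: "i \<in> Cv" for i
    proof -
      have nn: "n = Suc (n - 1)" using n2 by simp
      have "\<rho> ^ n + real n * \<rho> ^ (n - 1) * (s * (M i - m i)) \<le> (\<rho> + s * (M i - m i)) ^ n"
        using pow_lin_lower[of \<rho> "s * (M i - m i)" "n - 1"] rho0 dpos[OF i] nn
        by (metis \<rho>_def less_eq_real_def)
      then show ?thesis using VT0 by (intro mult_right_mono) auto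
    qed
    then show ?thesis by (intro add_left_mono sum_mono) auto
  qed
  finally have U: "measure lebesgue (\<Union>i\<in>Cv. D i) \<ge> \<rho> ^ n * VT + (\<Sum>i\<in>Cv. (real n * \<rho> ^ (n - 1) * (s * (M i - m i))) * VT)" .
  have sumd: "(\<Sum>i\<in>Cv. (real n * \<rho> ^ (n - 1) * (s * (M i - m i))) * VT) = real n * \<rho> ^ (n - 1) * s * (P + \<sigma>) * VT"
  proof -
    have "(\<Sum>i\<in>Cv. M i - m i) = P + \<sigma>" by (simp add: sum_subtractf P_def \<sigma>_def)
    then show ?thesis by (simp add: sum_distrib_left[symmetric] sum_distrib_right[symmetric] mult_ac)
  qed
  have rhon: "\<rho> ^ n = \<rho> ^ (n - 1) * \<rho>" using n2 by (metis Suc_diff_1 less_le_trans pos2 power_Suc2)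
  have "\<rho> ^ n * VT + real n * \<rho> ^ (n - 1) * s * (P + \<sigma>) * VT = (\<rho> ^ (n - 1) * (\<rho> + n * s * (P + \<sigma>))) * VT"
    unfolding rhon by (simp add: algebra_simps)
  also have "\<dots> > 1 * VT" using KI(4) VT0 unfolding \<rho>_def by (intro mult_strict_right_mono) auto
  finally have gt: "measure lebesgue (\<Union>i\<in>Cv. D i) > VT" using U sumd by simp
  have "measure lebesgue (\<Union>i\<in>Cv. D i) \<le> measure lebesgue L"
    using DL Dm finC by (intro measure_mono_fmeasurable lmeasurable_compact Lcomp) (auto intro: sets.finite_UN fmeasurableD)
  then have volL: "measure lebesgue L > measure lebesgue T" using gt by (simp add: VT_def)
  show ?thesis
    by (intro exI[of _ t]) (use t0 projL volL in \<open>simp add: L_def Let_def\<close>)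
qed


end
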